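(* Let $H$ be a commutative monoid with identity $1_H$ and group of units $H^\times$. The following are equivalent: (a) $\mathcal{P}_{\mathrm{fin},1}(H)$ is UmF; (b) $H\setminus H^\times$ is a breakable subsemigroup of $H$, the group of units $H^\times$ has order $\le 2$, and $H$ is the trivial ideal extension of $H\setminus H^\times$ by $H^\times$.
   Context: For a monoid $H$, $\mathcal{P}_{\mathrm{fin},1}(H)$ denotes the set of all non-empty finite subsets of $H$ containing $1_H$; it is a monoid under setwise multiplication $XY=\{xy: x\in X, y\in Y\}$. Divisibility in a monoid $M$: $x\mid_M y$ iff $y\in MxM=\{uxv: u,v\in M\}$; $x,y$ are associated if each divides the other; $x$ properly divides $y$ if $x\mid_M y$ but $y\nmid_M x$. A unit-divisor is an element dividing $1_M$; otherwise it is a non-unit-divisor. An irreducible of $M$ is a non-unit-divisor $a$ such that $a\neq xy$ for all non-unit-divisors $x,y$ that both properly divide $a$. A factorization of $x\in M$ is a finite word $a_1\ast\cdots\ast a_n$ (possibly empty) over the set of irreducibles of $M$ with $a_1\cdots a_n=x$. For words $\mathfrak a,\mathfrak b$ over $M$, write $\mathfrak a\sqsubseteq\mathfrak b$ if $\mathfrak a$ is, up to replacing letters by associated elements, a subword (subsequence) of some permutation of $\mathfrak b$; $\mathfrak a,\mathfrak b$ are equivalent if $\mathfrak a\sqsubseteq\mathfrak b\sqsubseteq\mathfrak a$. A factorization $\mathfrak a$ of $x$ is minimal if there is no factorization $\mathfrak b$ of $x$ with $\mathfrak b\sqsubseteq\mathfrak a$ and $\mathfrak a\not\sqsubseteq\mathfrak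 b$. $M$ is UmF if every non-unit-divisor is a product of irreducibles and any two minimal factorizations of the same element are equivalent. A semigroup $S$ is breakable if $xy\in\{x,y\}$ for all $x,y\in S$. "$H$ is the trivial ideal extension of $H\setminus H^\times$ by $H^\times$" means $uy=yu=y$ for all $u\in H^\times$ and $y\in H\setminus H^\times$ (the operation on $H^\times\cup(H\setminus H^\times)$ extends those of the two disjoint semigroups by this rule). *)

theory Defs
  imports Main "HOL-Library.Sublist" "HOL-Library.Multiset"
begin

definition mdvd :: "'m set \<Rightarrow> ('m \<Rightarrow> 'm \<Rightarrow> 'm) \<Rightarrow> 'm \<Rightarrow> 'm \<Rightarrow> bool" where
  "mdvd M f x y \<longleftrightarrow> (\<exists>u\<in>M. \<exists>v\<in>M. y = f (f u x) v)"

definition massoc :: "'m set \<Rightarrow> ('m \<Rightarrow> 'm \<Rightarrow> 'm) \<Rightarrow> 'm \<Rightarrow> 'm \<Rightarrow> bool" where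
  "massoc M f x y \<longleftrightarrow> mdvd M f x y \<and> mdvd M f y x"

definition mproper_dvd :: "'m set \<Rightarrow> ('m \<Rightarrow> 'm \<Rightarrow> 'm) \<Rightarrow> 'm \<Rightarrow> 'm \<Rightarrow> bool" where
  "mproper_dvd M f x y \<longleftrightarrow> mdvd M f x y \<and> \<not> mdvd M f y x"

definition unit_divisor :: "'m set \<Rightarrow> ('m \<Rightarrow> 'm \<Rightarrow> 'm) \<Rightarrow> 'm \<Rightarrow> 'm \<Rightarrow> bool" where
  "unit_divisor M f e x \<longleftrightarrow> x \<in> M \<and> mdvd M f x e"

definition non_unit_divisor :: "'m set \<Rightarrow> ('m \<Rightarrow> 'm \<Rightarrow> 'm) \<Rightarrow> 'm \<Rightarrow> 'm \<Rightarrow> bool" where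
  "non_unit_divisor M f e x \<longleftrightarrow> x \<in> M \<and> \<not> mdvd M f x e"

definition mirreducible :: "'m set \<Rightarrow> ('m \<Rightarrow> 'm \<Rightarrow> 'm) \<Rightarrow> 'm \<Rightarrow> 'm \<Rightarrow> bool" where
  "mirreducible M f e a \<longleftrightarrow> non_unit_divisor M f e a \<and>
     (\<forall>x y. non_unit_divisor M f e x \<and> non_unit_divisor M f e y \<and>
            mproper_dvd M f x a \<and> mproper_dvd M f y a \<longrightarrow> a \<noteq> f x y)"

definition word_prod :: "('m \<Rightarrow> 'm \<Rightarrow> 'm) \<Rightarrow> 'm \<Rightarrow> 'm list \<Rightarrow> 'm" where
  "word_prod f e as = foldr f as e"

definition factorization :: "'m set \<Rightarrow> ('m \<Rightarrow> 'm \<Rightarrow> 'm) \<Rightarrow> 'm \<Rightarrow> 'm \<Rightarrow> 'm list \<Rightarrow> bool" where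
  "factorization M f e x as \<longleftrightarrow> (\<forall>a\<in>set as. mirreducible M f e a) \<and> word_prod f e as = x"

definition word_le :: "'m set \<Rightarrow> ('m \<Rightarrow> 'm \<Rightarrow> 'm) \<Rightarrow> 'm list \<Rightarrow> 'm list \<Rightarrow> bool" where
  "word_le M f as bs \<longleftrightarrow> (\<exists>as' bs'. list_all2 (massoc M f) as as' \<and>
       mset bs' = mset bs \<and> subseq as' bs')"

definition word_equiv :: "'m set \<Rightarrow> ('m \<Rightarrow> 'm \<Rightarrow> 'm) \<Rightarrow> 'm list \<Rightarrow> 'm list \<Rightarrow> bool" where
  "word_equiv M f as bs \<longleftrightarrow> word_le M f as bs \<and> word_le M f bs as"

definition minimal_factorization :: "'m set \<Rightarrow> ('m \<Rightarrow> 'm \<Rightarrow> 'm) \<Rightarrow> 'm \<Rightarrow> 'm \<Rightarrow> 'm list \<Rightarrow> bool" where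
  "minimal_factorization M f e x as \<longleftrightarrow> factorization M f e x as \<and>
     \<not> (\<exists>bs. factorization M f e x bs \<and> word_le M f bs as \<and> \<not> word_le M f as bs)"

definition UmF :: "'m set \<Rightarrow> ('m \<Rightarrow> 'm \<Rightarrow> 'm) \<Rightarrow> 'm \<Rightarrow> bool" where
  "UmF M f e \<longleftrightarrow>
     (\<forall>x. non_unit_divisor M f e x \<longrightarrow> (\<exists>as. factorization M f e x as)) \<and>
     (\<forall>x as bs. minimal_factorization M f e x as \<and> minimal_factorization M f e x bs
        \<longrightarrow> word_equiv M f as bs)"

definition Pfin1 :: "'a::monoid_mult set set" where
  "Pfin1 = {X. finite X \<and> X \<noteq> {} \<and> 1 \<in> X}"

definition set_mult :: "'a::monoid_mult set \<Rightarrow> 'a set \<Rightarrow> 'a set" where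
  "set_mult X Y = {x * y | x y. x \<in> X \<and> y \<in> Y}"

definition units_of_monoid :: "'a::comm_monoid_mult set" where
  "units_of_monoid = {u. \<exists>v. u * v = 1}"

definition breakable :: "'a::times set \<Rightarrow> bool" where
  "breakable S \<longleftrightarrow> (\<forall>x\<in>S. \<forall>y\<in>S. x * y \<in> {x, y})"

end

theory Submission
  imports Defs
begin

lemma subseq_mset: "subseq xs ys \<Longrightarrow> mset xs \<subseteq># mset ys"
  by (induction rule: list_emb.induct) (auto intro: subset_mset.order_trans)

lemma sm_insert[simp]: "set_mult (insert x X) Y = (\<lambda>y. x*y) ` Y \<union> set_mult X Y"
  by (auto simp: set_mult_def)

lemma sm_empty[simp]: "set_mult {} Y = {}"
  by (auto simp: set_mult_def)

lemma sm_one_right[simp]: "set_mult X {1} = (X::'a::monoid_mult set)"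
  by (auto simp: set_mult_def)

lemma mdvd_sub:
  assumes "mdvd (Pfin1::'a::comm_monoid_mult set set) set_mult X Y" shows "X \<subseteq> Y"
proof
  fix x assume x: "x \<in> X"
  from assms obtain u v where uv: "u \<in> Pfin1" "v \<in> Pfin1" "Y = set_mult (set_mult u X) v"
    unfolding mdvd_def by blast
  have "1 * x \<in> set_mult u X" using uv(1) x unfolding set_mult_def Pfin1_def by blast
  then have "1 * x * 1 \<in> Y" using uv unfolding set_mult_def Pfin1_def by blast
  then show "x \<in> Y" by simp
qed

lemma one_Pfin1: "{1} \<in> Pfin1"
  by (simp add: Pfin1_def)

lemma mdvd_refl: "mdvd (Pfin1::'a::comm_monoid_mult set set) set_mult X X"
  unfolding mdvd_def using one_Pfin1 by (intro bexI[of _ "{1}"]) (auto simp: image_def)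

lemma massoc_eq: "massoc (Pfin1::'a::comm_monoid_mult set set) set_mult X Y \<longleftrightarrow> X = Y"
  using mdvd_sub mdvd_refl unfolding massoc_def by blast

lemma nud: "non_unit_divisor (Pfin1::'a::comm_monoid_mult set set) set_mult {1} X \<longleftrightarrow> X \<in> Pfin1 \<and> X \<noteq> {1}"
proof
  assume "non_unit_divisor (Pfin1::'a::comm_monoid_mult set set) set_mult {1} X"
  then show "X \<in> Pfin1 \<and> X \<noteq> {1}" using mdvd_refl unfolding non_unit_divisor_def by blast
next
  assume a: "X \<in> Pfin1 \<and> X \<noteq> {1}"
  have "\<not> mdvd (Pfin1::'a::comm_monoid_mult set set) set_mult X {1}"
  proof
    assume "mdvd (Pfin1::'a::comm_monoid_mult set set) set_mult X {1}"
    then have "X \<subseteq> {1}" by (rule mdvd_sub)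
    with a show False unfolding Pfin1_def by blast
  qed
  with a show "non_unit_divisor (Pfin1::'a::comm_monoid_mult set set) set_mult {1} X"
    unfolding non_unit_divisor_def by blast
qed

lemma pdvd: "mproper_dvd (Pfin1::'a::comm_monoid_mult set set) set_mult X A \<Longrightarrow> X \<subseteq> A \<and> X \<noteq> A"
  unfolding mproper_dvd_def using mdvd_sub mdvd_refl by blast

lemma word_le_iff: "word_le (Pfin1::'a::comm_monoid_mult set set) set_mult as bs \<longleftrightarrow> mset as \<subseteq># mset bs"
proof -
  have e: "massoc (Pfin1::'a::comm_monoid_mult set set) set_mult = (=)"
    by (intro ext) (simp add: massoc_eq)
  have "word_le (Pfin1::'a::comm_monoid_mult set set) set_mult as bs \<longleftrightarrow>
     (\<exists>bs'. mset bs' = mset bs \<and> subseq as bs')"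
    unfolding word_le_def e list.rel_eq by blast
  also have "\<dots> \<longleftrightarrow> mset as \<subseteq># mset bs"
  proof
    assume "\<exists>bs'. mset bs' = mset bs \<and> subseq as bs'"
    then show "mset as \<subseteq># mset bs" using subseq_mset by metis
  next
    assume s: "mset as \<subseteq># mset bs"
    obtain ys where ys: "mset ys = mset bs - mset as" using ex_mset by blast
    have "mset (as @ ys) = mset bs" using s ys by simp
    moreover have "subseq as (as @ ys)" using subseq_rev_drop_many[of as as ys] by simp
    ultimately show "\<exists>bs'. mset bs' = mset bs \<and> subseq as bs'" by blast
  qed
  finally show ?thesis .
qed

abbreviation "PM \<equiv> (Pfin1::'a::comm_monoid_mult set set)"

lemma irr_crit:
  assumes "A \<in> PM" "A \<noteq> {1}"
    and "\<And>X Y. X \<in> PM \<Longrightarrow> Y \<in> PM \<Longrightarrow> X \<noteq> {1} \<Longrightarrow> Y \<noteq> {1} \<Longrightarrow> X \<subseteq> A \<Longrightarrow> Y \<subseteq> A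
          \<Longrightarrow> X \<noteq> A \<Longrightarrow> Y \<noteq> A \<Longrightarrow> A = set_mult X Y \<Longrightarrow> False"
  shows "mirreducible PM set_mult {1} A"
  unfolding mirreducible_def
proof (intro conjI allI impI)
  show "non_unit_divisor PM set_mult {1} A" using assms(1,2) by (simp add: nud)
  fix X Y assume h: "non_unit_divisor PM set_mult {1} X \<and> non_unit_divisor PM set_mult {1} Y \<and>
     mproper_dvd PM set_mult X A \<and> mproper_dvd PM set_mult Y A"
  have x: "X \<in> PM" "X \<noteq> {1}" "Y \<in> PM" "Y \<noteq> {1}" using h by (simp_all add: nud)
  have y: "X \<subseteq> A" "X \<noteq> A" "Y \<subseteq> A" "Y \<noteq> A" using h pdvd by blast+
  show "A \<noteq> set_mult X Y"
  proof
    assume "A = set_mult X Y"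
    then show False using assms(3)[OF x(1,3,2,4) y(1,3,2,4)] by blast
  qed
qed

lemma irr2:
  assumes "(a::'a::comm_monoid_mult) \<noteq> 1" shows "mirreducible PM set_mult {1} {1,a}"
proof (rule irr_crit)
  show "{1, a} \<in> PM" by (simp add: Pfin1_def)
  show "{1, a} \<noteq> {1::'a}" using assms by auto
  fix X Y :: "'a set"
  assume "X \<in> PM" "X \<noteq> {1}" "X \<subseteq> {1,a}" "X \<noteq> {1,a}"
  then show False unfolding Pfin1_def by blast
qed

lemma sub3:
  assumes "(X::'a::one set) \<subseteq> {1,a,b}" "1 \<in> X" "X \<noteq> {1}" "X \<noteq> {1,a,b}"
  shows "X = {1,a} \<or> X = {1,b}"
proof -
  have "X \<subseteq> {1,a,b}" by (fact assms(1))
  show ?thesis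
  proof (cases "a \<in> X")
    case True
    then have "b \<notin> X \<or> b = a \<or> b = 1" using assms(1,2,4) by auto
    then show ?thesis using True assms(1,2) by auto
  next
    case False
    then show ?thesis using assms(1,2,3) by auto
  qed
qed

lemma irr3:
  fixes a b :: "'a::comm_monoid_mult"
  assumes aa: "a*a = a" and bb: "b*b = b" and ab: "a*b \<notin> {1,a,b}"
  shows "mirreducible PM set_mult {1} {1,a,b}"
proof (rule irr_crit)
  show "{1, a, b} \<in> PM" by (simp add: Pfin1_def)
  show "{1, a, b} \<noteq> {1::'a}" using ab by auto
  fix X Y :: "'a set"
  assume h: "X \<in> PM" "Y \<in> PM" "X \<noteq> {1}" "Y \<noteq> {1}" "X \<subseteq> {1,a,b}" "Y \<subseteq> {1,a,b}"
    "X \<noteq> {1,a,b}" "Y \<noteq> {1,a,b}" "{1,a,b} = set_mult X Y"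
  have X: "X = {1,a} \<or> X = {1,b}" using sub3 h unfolding Pfin1_def by blast
  have Y: "Y = {1,a} \<or> Y = {1,b}" using sub3 h unfolding Pfin1_def by blast
  have ne: "a \<noteq> b" using ab aa by auto
  have "b \<noteq> 1" "a \<noteq> 1" using ab by auto
  have P1: "set_mult {1,a} {1,a} = {1,a}" using aa by auto
  have P2: "set_mult {1,b} {1,b} = {1,b}" using bb by auto
  have P3: "a*b \<in> set_mult {1,a} {1,b}" by auto
  have P4: "a*b \<in> set_mult {1,b} {1,a}" by (auto simp: mult.commute)
  have "{1,a} \<noteq> {1,a,b}" "{1,b} \<noteq> {1,a,b}" using ne \<open>b \<noteq> 1\<close> \<open>a \<noteq> 1\<close> by auto
  then have n1: "{1,a,b} \<noteq> set_mult {1,a} {1,a}" "{1,a,b} \<noteq> set_mult {1,b} {1,b}"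
    using P1 P2 by auto
  have n2: "{1,a,b} \<noteq> set_mult {1,a} {1,b}" "{1,a,b} \<noteq> set_mult {1,b} {1,a}"
    using P3 P4 ab by blast+
  from X Y n1 n2 h(9) show False by blast
qed


lemma exists_min:
  assumes F: "factorization PM set_mult {1} Z F"
  shows "\<exists>G. minimal_factorization PM set_mult {1} Z G \<and> set G \<subseteq> set F"
proof -
  define P where "P n \<longleftrightarrow> (\<exists>G. factorization PM set_mult {1} Z G \<and> mset G \<subseteq># mset F \<and> length G = n)" for n
  have "P (length F)" unfolding P_def using F by blast
  then obtain n where n: "P n" "\<And>m. m < n \<Longrightarrow> \<not> P m"
    using exists_least_iff[of P] by blast
  then obtain G where G: "factorization PM set_mult {1} Z G" "mset G \<subseteq># mset F" "length G = n"
    unfolding P_def by blast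
  have "minimal_factorization PM set_mult {1} Z G"
    unfolding minimal_factorization_def
  proof (intro conjI notI)
    show "factorization PM set_mult {1} Z G" by (fact G(1))
    assume "\<exists>bs. factorization PM set_mult {1} Z bs \<and> word_le PM set_mult bs G \<and> \<not> word_le PM set_mult G bs"
    then obtain bs where bs: "factorization PM set_mult {1} Z bs" "mset bs \<subseteq># mset G" "\<not> mset G \<subseteq># mset bs"
      by (auto simp: word_le_iff)
    then have "mset bs \<subset># mset G" by (simp add: subset_mset.less_le_not_le)
    then have "length bs < n" using G(3) mset_subset_size by fastforce
    moreover have "P (length bs)" unfolding P_def using bs G(2) subset_mset.order_trans by blast
    ultimately show False using n(2) by blast
  qed
  moreover have "set G \<subseteq> set F" using set_mset_mono[OF G(2)] by simp
  ultimately show ?thesis by blast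
qed

lemma min2:
  assumes F: "factorization PM set_mult {1} Z [P, Q]" and "Z \<noteq> {1}" "Z \<noteq> P" "Z \<noteq> Q"
  shows "minimal_factorization PM set_mult {1} Z [P, Q]"
  unfolding minimal_factorization_def
proof (intro conjI notI)
  show "factorization PM set_mult {1} Z [P, Q]" by (fact F)
  assume "\<exists>bs. factorization PM set_mult {1} Z bs \<and> word_le PM set_mult bs [P, Q] \<and> \<not> word_le PM set_mult [P, Q] bs"
  then obtain bs where bs: "factorization PM set_mult {1} Z bs" "mset bs \<subseteq># mset [P,Q]" "\<not> mset [P,Q] \<subseteq># mset bs"
    by (auto simp: word_le_iff)
  then have "mset bs \<subset># mset [P,Q]" by (simp add: subset_mset.less_le_not_le)
  then have "length bs < 2" using mset_subset_size by fastforce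
  moreover have "set bs \<subseteq> {P, Q}" using set_mset_mono[OF bs(2)] by simp
  moreover have "word_prod set_mult {1} bs = Z" using bs(1) unfolding factorization_def by blast
  ultimately show False using assms(2-4)
    by (cases bs) (auto simp: word_prod_def)
qed

lemma bad:
  fixes Z :: "'a::comm_monoid_mult set"
  assumes U: "UmF (Pfin1::'a set set) set_mult {1}"
    and F1: "factorization PM set_mult {1} Z F1"
    and F2: "minimal_factorization PM set_mult {1} Z F2"
  shows "set F2 \<subseteq> set F1"
proof -
  obtain G where G: "minimal_factorization PM set_mult {1} Z G" "set G \<subseteq> set F1"
    using exists_min[OF F1] by blast
  have "word_equiv PM set_mult G F2" using conjunct2[OF U[unfolded UmF_def]] G(1) F2 by blast
  then have "mset F2 \<subseteq># mset G" unfolding word_equiv_def by (simp add: word_le_iff)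
  then have "set F2 \<subseteq> set G" using set_mset_mono by fastforce
  with G(2) show ?thesis by blast
qed


lemma fact2:
  fixes P Q :: "'a::comm_monoid_mult set"
  assumes "mirreducible PM set_mult {1} P" "mirreducible PM set_mult {1} Q" "set_mult P Q = Z"
  shows "factorization PM set_mult {1} Z [P, Q]"
  using assms unfolding factorization_def word_prod_def by simp

lemma caseA:
  fixes a :: "'a::comm_monoid_mult"
  assumes U: "UmF (Pfin1::'a set set) set_mult {1}"
  shows "a*a \<in> {1,a}"
proof (rule ccontr)
  assume n: "a*a \<notin> {1,a}"
  then have a1: "a \<noteq> 1" by auto
  define Z where "Z = {1,a,a*a,a*(a*a)}"
  have F1: "factorization PM set_mult {1} Z [{1,a},{1,a},{1,a}]"
    unfolding factorization_def word_prod_def using irr2[OF a1]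
    by (auto simp: Z_def)
  have "set_mult {1,a} {1,a*a} = Z" by (auto simp: Z_def)
  then have F2: "factorization PM set_mult {1} Z [{1,a},{1,a*a}]"
    using fact2 irr2 a1 n by blast
  have "Z \<noteq> {1}" "Z \<noteq> {1,a}" "Z \<noteq> {1,a*a}" using a1 n unfolding Z_def by auto
  then have "minimal_factorization PM set_mult {1} Z [{1,a},{1,a*a}]" using min2[OF F2] by blast
  from bad[OF U F1 this] have "{1,a*a} = {1,a}" by simp
  then show False using n by auto
qed

lemma caseB:
  fixes a b :: "'a::comm_monoid_mult"
  assumes U: "UmF (Pfin1::'a set set) set_mult {1}" and aa: "a*a = 1" and ab: "a*b \<notin> {1,a,b}"
  shows False
proof -
  have a1: "a \<noteq> 1" and b1: "b \<noteq> 1" and ba: "b \<noteq> a" using ab aa by auto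
  have ab1: "a*b \<noteq> 1" using ab by auto
  have e: "a*(a*b) = b" by (simp add: mult.assoc[symmetric] aa)
  define Z where "Z = {1,a,b,a*b}"
  have "set_mult {1,a} {1,b} = Z" by (auto simp: Z_def)
  then have F1: "factorization PM set_mult {1} Z [{1,a},{1,b}]"
    using fact2 irr2 a1 b1 by blast
  have "set_mult {1,a} {1,a*b} = Z" using e by (auto simp: Z_def)
  then have F2: "factorization PM set_mult {1} Z [{1,a},{1,a*b}]"
    using fact2 irr2 a1 ab1 by blast
  have "Z \<noteq> {1}" "Z \<noteq> {1,a}" "Z \<noteq> {1,a*b}" using a1 b1 ba ab unfolding Z_def by auto
  then have "minimal_factorization PM set_mult {1} Z [{1,a},{1,a*b}]" using min2[OF F2] by blast
  from bad[OF U F1 this] have "{1,a*b} = {1,a} \<or> {1,a*b} = {1,b}" by simp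
  then show False using ab by auto
qed

lemma caseC:
  fixes a b :: "'a::comm_monoid_mult"
  assumes U: "UmF (Pfin1::'a set set) set_mult {1}" and aa: "a*a = a" and bb: "b*b = b"
    and ab: "a*b \<notin> {1,a,b}"
  shows False
proof -
  have a1: "a \<noteq> 1" and b1: "b \<noteq> 1" and ba: "b \<noteq> a" using ab aa by auto
  have ab1: "a*b \<noteq> 1" using ab by auto
  have e: "a*(a*b) = a*b" "b*(a*b) = a*b"
    by (simp_all add: mult.assoc[symmetric] aa, simp add: mult.commute mult.left_commute bb)
  define Z where "Z = {1,a,b,a*b}"
  have "set_mult {1,a} {1,b} = Z" by (auto simp: Z_def)
  then have F1: "factorization PM set_mult {1} Z [{1,a},{1,b}]"
    using fact2 irr2 a1 b1 by blast
  have "set_mult {1,a,b} {1,a*b} = Z" using e by (auto simp: Z_def)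
  then have F2: "factorization PM set_mult {1} Z [{1,a,b},{1,a*b}]"
    using fact2 irr2 irr3[OF aa bb ab] ab1 by blast
  have "Z \<noteq> {1}" "Z \<noteq> {1,a,b}" "Z \<noteq> {1,a*b}" using a1 b1 ba ab unfolding Z_def by auto
  then have "minimal_factorization PM set_mult {1} Z [{1,a,b},{1,a*b}]" using min2[OF F2] by blast
  from bad[OF U F1 this] have "{1,a,b} = {1,a} \<or> {1,a,b} = {1,b}" by simp
  then show False using a1 b1 ba by auto
qed

lemma dirA:
  fixes a b :: "'a::comm_monoid_mult"
  assumes U: "UmF (Pfin1::'a set set) set_mult {1}"
  shows "a*b \<in> {1,a,b}"
proof (rule ccontr)
  assume ab: "a*b \<notin> {1,a,b}"
  have "a*a \<in> {1,a}" "b*b \<in> {1,b}" using caseA[OF U] by blast+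
  moreover have "b*a \<notin> {1,b,a}" using ab by (auto simp: mult.commute)
  ultimately show False using caseB[OF U] caseC[OF U] ab by blast
qed


lemma union_prop:
  fixes X Y :: "'a::comm_monoid_mult set"
  assumes B: "\<forall>a b::'a. a*b \<in> {1,a,b}" and "1 \<in> X" "1 \<in> Y"
  shows "set_mult X Y = X \<union> Y"
proof
  show "set_mult X Y \<subseteq> X \<union> Y"
  proof
    fix z assume "z \<in> set_mult X Y"
    then obtain x y where "z = x*y" "x \<in> X" "y \<in> Y" unfolding set_mult_def by blast
    moreover have "x*y \<in> {1,x,y}" using B by blast
    ultimately show "z \<in> X \<union> Y" using assms(2) by auto
  qed
  show "X \<union> Y \<subseteq> set_mult X Y"
  proof
    fix z assume "z \<in> X \<union> Y"
    then show "z \<in> set_mult X Y" unfolding set_mult_def using assms(2,3)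
      by (metis (mono_tags, lifting) Un_iff mem_Collect_eq mult_1_left mult_1_right)
  qed
qed

lemma wp_union:
  fixes as :: "'a::comm_monoid_mult set list"
  assumes B: "\<forall>a b::'a. a*b \<in> {1,a,b}" and "\<forall>A\<in>set as. 1 \<in> A"
  shows "word_prod set_mult {1} as = insert 1 (\<Union>(set as))"
  using assms(2)
proof (induction as)
  case Nil
  then show ?case by (simp add: word_prod_def)
next
  case (Cons A as)
  then have IH: "word_prod set_mult {1} as = insert 1 (\<Union>(set as))" by simp
  have "word_prod set_mult {1} (A # as) = set_mult A (word_prod set_mult {1} as)"
    by (simp add: word_prod_def)
  also have "\<dots> = A \<union> insert 1 (\<Union>(set as))" using union_prop[OF B] Cons.prems IH by simp
  also have "\<dots> = insert 1 (\<Union>(set (A # as)))" using Cons.prems by auto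
  finally show ?case .
qed

lemma irr_form:
  fixes A :: "'a::comm_monoid_mult set"
  assumes B: "\<forall>a b::'a. a*b \<in> {1,a,b}" and irr: "mirreducible PM set_mult {1} A"
  shows "\<exists>a. a \<noteq> 1 \<and> A = {1,a}"
proof -
  have A: "A \<in> PM" "A \<noteq> {1}" using irr unfolding mirreducible_def by (simp_all add: nud)
  then obtain a where a: "a \<in> A" "a \<noteq> 1" unfolding Pfin1_def by blast
  have A1: "1 \<in> A" "finite A" using A unfolding Pfin1_def by auto
  show ?thesis
  proof (rule ccontr)
    assume "\<not> ?thesis"
    then have ne: "A \<noteq> {1,a}" using a by blast
    then obtain c where c: "c \<in> A" "c \<noteq> 1" "c \<noteq> a" using a A1 by blast
    define X where "X = {1,a}"
    define Y where "Y = A - {a}"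
    have X: "X \<in> PM" "X \<noteq> {1}" unfolding X_def Pfin1_def using a by auto
    have Y: "Y \<in> PM" "Y \<noteq> {1}" unfolding Y_def Pfin1_def using A1 a c by auto
    have "set_mult X A = X \<union> A" by (rule union_prop[OF B]) (auto simp: X_def A1)
    then have XA: "set_mult X A = A" using a A1 unfolding X_def by auto
    have YA: "set_mult Y A = A" using union_prop[OF B, of Y A] a A1 unfolding Y_def by auto
    have s1: "set_mult {1} Z = Z" for Z :: "'a set" by (auto simp: image_def)
    have dX: "mdvd PM set_mult X A" unfolding mdvd_def using one_Pfin1 A(1) XA s1 by metis
    have dY: "mdvd PM set_mult Y A" unfolding mdvd_def using one_Pfin1 A(1) YA s1 by metis
    have nX: "\<not> mdvd PM set_mult A X"
    proof
      assume "mdvd PM set_mult A X"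
      then have "A \<subseteq> X" by (rule mdvd_sub)
      then show False using ne a A1 unfolding X_def by blast
    qed
    have nY: "\<not> mdvd PM set_mult A Y"
    proof
      assume "mdvd PM set_mult A Y"
      then have "A \<subseteq> Y" by (rule mdvd_sub)
      then show False using a unfolding Y_def by blast
    qed
    have "A = set_mult X Y" using union_prop[OF B, of X Y] a A1 unfolding X_def Y_def by auto
    moreover have "non_unit_divisor PM set_mult {1} X" "non_unit_divisor PM set_mult {1} Y"
      using X Y by (simp_all add: nud)
    moreover have "mproper_dvd PM set_mult X A" "mproper_dvd PM set_mult Y A"
      using dX dY nX nY unfolding mproper_dvd_def by blast+
    ultimately show False using irr unfolding mirreducible_def by blast
  qed
qed


lemma fact_char:
  fixes Z :: "'a::comm_monoid_mult set"
  assumes B: "\<forall>a b::'a. a*b \<in> {1,a,b}"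
  shows "factorization PM set_mult {1} Z as \<longleftrightarrow>
     (\<forall>A\<in>set as. mirreducible PM set_mult {1} A) \<and> Z = insert 1 (\<Union>(set as))"
proof -
  have "(\<forall>A\<in>set as. mirreducible PM set_mult {1} A) \<Longrightarrow> word_prod set_mult {1} as = insert 1 (\<Union>(set as))"
    using wp_union[OF B] irr_form[OF B] by (metis insertI1)
  then show ?thesis unfolding factorization_def by auto
qed

lemma min_char:
  fixes Z :: "'a::comm_monoid_mult set"
  assumes B: "\<forall>a b::'a. a*b \<in> {1,a,b}"
    and m: "minimal_factorization PM set_mult {1} Z as"
  shows "distinct as \<and> set as = (\<lambda>a. {1,a}) ` (Z - {1})"
proof
  have fac: "factorization PM set_mult {1} Z as" using m unfolding minimal_factorization_def by blast
  then have irr: "\<forall>A\<in>set as. mirreducible PM set_mult {1} A" and Z: "Z = insert 1 (\<Union>(set as))"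
    using fact_char[OF B] by blast+
  have form: "\<forall>A\<in>set as. \<exists>a. a \<noteq> 1 \<and> A = {1,a}" using irr irr_form[OF B] by blast
  show "set as = (\<lambda>a. {1,a}) ` (Z - {1})"
  proof
    show "set as \<subseteq> (\<lambda>a. {1,a}) ` (Z - {1})"
    proof
      fix A assume "A \<in> set as"
      then obtain a where "a \<noteq> 1" "A = {1,a}" "A \<in> set as" using form by blast
      then show "A \<in> (\<lambda>a. {1,a}) ` (Z - {1})" using Z by blast
    qed
    show "(\<lambda>a. {1,a}) ` (Z - {1}) \<subseteq> set as"
    proof
      fix A assume "A \<in> (\<lambda>a. {1,a}) ` (Z - {1})"
      then obtain a where a: "a \<in> Z" "a \<noteq> 1" "A = {1,a}" by blast
      then obtain C where C: "C \<in> set as" "a \<in> C" using Z by blast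
      then obtain c where "c \<noteq> 1" "C = {1,c}" using form by blast
      then show "A \<in> set as" using C a by auto
    qed
  qed
  show "distinct as"
  proof (rule ccontr)
    assume nd: "\<not> distinct as"
    have "factorization PM set_mult {1} Z (remdups as)"
      using fact_char[OF B] irr Z by simp
    moreover have "word_le PM set_mult (remdups as) as"
      by (simp add: word_le_iff mset_remdups_subset_eq)
    moreover have "\<not> word_le PM set_mult as (remdups as)"
    proof
      assume "word_le PM set_mult as (remdups as)"
      then have "mset as \<subseteq># mset (remdups as)" by (simp add: word_le_iff)
      then have "size (mset as) \<le> size (mset (remdups as))" by (rule size_mset_mono)
      then have "length as = length (remdups as)" using length_remdups_leq[of as] by simp
      then show False using nd by (metis distinct_remdups length_remdups_eq)
    qed
    ultimately show False using m unfolding minimal_factorization_def by blast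
  qed
qed

lemma dirB:
  assumes B: "\<forall>a b::'a::comm_monoid_mult. a*b \<in> {1,a,b}"
  shows "UmF (Pfin1::'a set set) set_mult {1}"
  unfolding UmF_def
proof (intro conjI allI impI)
  fix X :: "'a set"
  assume "non_unit_divisor Pfin1 set_mult {1} X"
  then have "X \<in> PM" by (simp add: nud)
  then have X: "finite X" "1 \<in> X" unfolding Pfin1_def by auto
  obtain xs where xs: "set xs = X - {1}" using finite_list X by blast
  define as where "as = map (\<lambda>a. {1,a}) xs"
  have "\<forall>A\<in>set as. mirreducible PM set_mult {1} A" unfolding as_def using xs irr2 by auto
  moreover have "X = insert 1 (\<Union>(set as))" unfolding as_def using xs X by auto
  ultimately show "\<exists>as. factorization Pfin1 set_mult {1} X as" using fact_char[OF B] by blast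
next
  fix X :: "'a set" and as bs
  assume "minimal_factorization Pfin1 set_mult {1} X as \<and> minimal_factorization Pfin1 set_mult {1} X bs"
  then have "distinct as \<and> set as = (\<lambda>a. {1,a}) ` (X - {1})" "distinct bs \<and> set bs = (\<lambda>a. {1,a}) ` (X - {1})"
    using min_char[OF B] by blast+
  then have "mset as = mset bs" using set_eq_iff_mset_eq_distinct by metis
  then show "word_equiv Pfin1 set_mult as bs" unfolding word_equiv_def by (simp add: word_le_iff)
qed


lemma unit_iff: "(u::'a::comm_monoid_mult) \<in> units_of_monoid \<longleftrightarrow> (\<exists>v. u*v = 1)"
  by (simp add: units_of_monoid_def)

lemma cond_to_B:
  fixes a b :: "'a::comm_monoid_mult"
  assumes c: "(\<forall>x\<in>- (units_of_monoid :: 'a set). \<forall>y\<in>- units_of_monoid. x * y \<in> - units_of_monoid) \<and>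
     breakable (- (units_of_monoid :: 'a set)) \<and>
     finite (units_of_monoid :: 'a set) \<and> card (units_of_monoid :: 'a set) \<le> 2 \<and>
     (\<forall>u\<in>(units_of_monoid :: 'a set). \<forall>y\<in>- units_of_monoid. u * y = y \<and> y * u = y)"
  shows "a*b \<in> {1,a,b}"
proof -
  let ?U = "units_of_monoid :: 'a set"
  have fin: "finite ?U" and cd: "card ?U \<le> 2" using c by blast+
  have three: False if "x \<in> ?U" "y \<in> ?U" "z \<in> ?U" "x \<noteq> y" "x \<noteq> z" "y \<noteq> z" for x y z
  proof -
    have "card {x,y,z} \<le> card ?U" using that fin by (intro card_mono) auto
    moreover have "card {x,y,z} = 3" using that by simp
    ultimately show False using cd by simp
  qed
  have one: "(1::'a) \<in> ?U" by (simp add: unit_iff)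
  show ?thesis
  proof (cases "a \<in> ?U")
    case aU: True
    show ?thesis
    proof (cases "b \<in> ?U")
      case bU: True
      show ?thesis
      proof (cases "a = 1 \<or> b = 1")
        case True then show ?thesis by auto
      next
        case False
        then have "a = b" using three[OF one aU bU] by blast
        moreover have "a*a \<in> ?U" using aU unfolding unit_iff by (metis mult.assoc mult.commute mult_1_right)
        moreover have "a*a = 1 \<or> a*a = a"
        proof (rule ccontr)
          assume "\<not> (a*a = 1 \<or> a*a = a)"
          then show False using three[OF one aU \<open>a*a \<in> ?U\<close>] False by auto
        qed
        ultimately show ?thesis by auto
      qed
    next
      case False
      then show ?thesis using c aU by blast
    qed
  next
    case aN: False
    show ?thesis
    proof (cases "b \<in> ?U")
      case True
      then show ?thesis using c aN by blast
    next
      case False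
      then have "a*b \<in> {a,b}" using c aN unfolding breakable_def by blast
      then show ?thesis by blast
    qed
  qed
qed

lemma B_to_cond:
  assumes B: "\<forall>a b::'a::comm_monoid_mult. a*b \<in> {1,a,b}"
  shows "(\<forall>x\<in>- (units_of_monoid :: 'a set). \<forall>y\<in>- units_of_monoid. x * y \<in> - units_of_monoid) \<and>
     breakable (- (units_of_monoid :: 'a set)) \<and>
     finite (units_of_monoid :: 'a set) \<and> card (units_of_monoid :: 'a set) \<le> 2 \<and>
     (\<forall>u\<in>(units_of_monoid :: 'a set). \<forall>y\<in>- units_of_monoid. u * y = y \<and> y * u = y)"
proof (intro conjI ballI)
  let ?U = "units_of_monoid :: 'a set"
  have closed: "x * y \<notin> ?U" if "x \<notin> ?U" for x y :: 'a
    using that unfolding unit_iff by (metis mult.assoc)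
  show "x * y \<in> - ?U" if "x \<in> - ?U" "y \<in> - ?U" for x y using closed that by blast
  show "breakable (- ?U)" unfolding breakable_def
  proof (intro ballI)
    fix x y assume "x \<in> - ?U" "y \<in> - ?U"
    then have "x*y \<noteq> 1" using unit_iff by blast
    moreover have "x*y \<in> {1,x,y}" using B by blast
    ultimately show "x*y \<in> {x,y}" by blast
  qed
  have cancel: "y = 1" if uU: "u \<in> ?U" and uy: "u*y = u" for u y :: 'a
  proof -
    obtain w where w: "u*w = 1" using uU unfolding unit_iff by blast
    have "y = (u*w)*y" using w by simp
    also have "\<dots> = w*(u*y)" by (simp add: ac_simps)
    also have "\<dots> = 1" using uy w by (simp add: mult.commute)
    finally show ?thesis .
  qed
  have uniq: "v = u" if "u \<in> ?U" "v \<in> ?U" "u \<noteq> 1" "v \<noteq> 1" for u v :: 'a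
  proof -
    have "u*v \<in> {1,u,v}" using B by blast
    moreover have "u*v \<noteq> u" using cancel that by blast
    moreover have "u*v \<noteq> v" using cancel[OF that(2), of u] that by (metis mult.commute)
    ultimately have uv: "u*v = 1" by blast
    have "u*u \<in> {1,u}" using B by auto
    moreover have "u*u \<noteq> u" using cancel that by blast
    ultimately have uu: "u*u = 1" by blast
    have "v = (u*u)*v" using uu by simp
    also have "\<dots> = u*(u*v)" by (simp add: ac_simps)
    finally show ?thesis using uv by simp
  qed
  obtain u where sub: "?U \<subseteq> {1,u}"
  proof (cases "\<exists>u\<in>?U. u \<noteq> 1")
    case True
    then obtain u where "u \<in> ?U" "u \<noteq> 1" by blast
    then have "?U \<subseteq> {1,u}" using uniq by blast
    then show ?thesis using that by blast
  next
    case False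
    then have "?U \<subseteq> {1,1}" by blast
    then show ?thesis using that by blast
  qed
  show "finite ?U" using sub finite_subset by blast
  have "card ?U \<le> card {1,u}" using sub by (intro card_mono) auto
  also have "\<dots> \<le> 2" by (simp add: card_insert_le_m1)
  finally show "card ?U \<le> 2" .
  have one: "(1::'a) \<in> ?U" by (simp add: unit_iff)
  fix v y assume v: "v \<in> ?U" and y: "y \<in> - ?U"
  have "v*y \<in> {1,v,y}" using B by blast
  moreover have "v*y \<noteq> 1" using y unfolding unit_iff by (metis Compl_iff mult.commute unit_iff)
  moreover have "v*y \<noteq> v" using cancel[OF v, of y] y one by auto
  ultimately have "v*y = y" by blast
  then show "v * y = y" by simp
  then show "y * v = y" by (simp add: mult.commute)
qed

theorem theorem4p8:
  fixes H :: "'a::comm_monoid_mult itself"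
  shows "UmF (Pfin1 :: 'a set set) set_mult {1} \<longleftrightarrow>
    ((\<forall>x\<in>- (units_of_monoid :: 'a set). \<forall>y\<in>- units_of_monoid. x * y \<in> - units_of_monoid) \<and>
     breakable (- (units_of_monoid :: 'a set)) \<and>
     finite (units_of_monoid :: 'a set) \<and> card (units_of_monoid :: 'a set) \<le> 2 \<and>
     (\<forall>u\<in>(units_of_monoid :: 'a set). \<forall>y\<in>- units_of_monoid. u * y = y \<and> y * u = y))"
proof
  assume "UmF (Pfin1 :: 'a set set) set_mult {1}"
  then have "\<forall>a b::'a. a*b \<in> {1,a,b}" using dirA by blast
  then show "(\<forall>x\<in>- (units_of_monoid :: 'a set). \<forall>y\<in>- units_of_monoid. x * y \<in> - units_of_monoid) \<and>
     breakable (- (units_of_monoid :: 'a set)) \<and>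
     finite (units_of_monoid :: 'a set) \<and> card (units_of_monoid :: 'a set) \<le> 2 \<and>
     (\<forall>u\<in>(units_of_monoid :: 'a set). \<forall>y\<in>- units_of_monoid. u * y = y \<and> y * u = y)"
    by (rule B_to_cond)
next
  assume c: "(\<forall>x\<in>- (units_of_monoid :: 'a set). \<forall>y\<in>- units_of_monoid. x * y \<in> - units_of_monoid) \<and>
     breakable (- (units_of_monoid :: 'a set)) \<and>
     finite (units_of_monoid :: 'a set) \<and> card (units_of_monoid :: 'a set) \<le> 2 \<and>
     (\<forall>u\<in>(units_of_monoid :: 'a set). \<forall>y\<in>- units_of_monoid. u * y = y \<and> y * u = y)"
  have "\<forall>a b::'a. a*b \<in> {1,a,b}" using cond_to_B[OF c] by blast
  then show "UmF (Pfin1 :: 'a set set) set_mult {1}" by (rule dirB)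
qed

end
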